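(* Let $p$ be a prime, let $\boldsymbol{\alpha}=(\alpha_1,\ldots,\alpha_r)$ be a basis for a finite abelian $p$-group $G$, and let $j,j',k',k$ be integers with $0\le j\le j'<k'\le k$. Let $\beta\in G(j,k)$. Then: (i) If $\mathbf{x}={\rm DL}_{\boldsymbol{\alpha}}(k',k,\beta^{p^{k'-j}})$ and $\gamma=\beta^{p^{j'-j}}\boldsymbol{\alpha}(j',k)^{-\mathbf{x}}$, then $\gamma\in G(j',k')$. (ii) If moreover $\mathbf{v}={\rm DL}_{\boldsymbol{\alpha}}(j',k',\gamma)$ and $\mathbf{s}=\mathbf{q}(j',k')/\mathbf{q}(j',k)$ (componentwise quotient), then $\mathbf{s}\mathbf{v}+\mathbf{x}={\rm DL}_{\boldsymbol{\alpha}}(j',k,\beta^{p^{j'-j}})$.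
   Context: A vector $\boldsymbol{\gamma}=(\gamma_1,\ldots,\gamma_s)$ of group elements (trivial entries allowed) is a basis for $\langle\boldsymbol{\gamma}\rangle$ if every $\beta\in\langle\boldsymbol{\gamma}\rangle$ can be written uniquely as $\boldsymbol{\gamma}^{\mathbf{x}}=\gamma_1^{x_1}\cdots\gamma_s^{x_s}$ with $0\le x_i<|\gamma_i|$; then ${\rm DL}(\boldsymbol{\gamma},\beta)=\mathbf{x}$, regarded as an element of $R_{\boldsymbol{\gamma}}=\prod_i\mathbb{Z}/|\gamma_i|\mathbb{Z}$ (integer vectors are identified with their reductions; exponentiation by an element of $R_{\boldsymbol{\gamma}}$ uses representatives). For nonnegative integers $a<b$: $G(a,b)=\{\beta^{p^a}:\beta\in G,\ \beta^{p^b}=1_G\}$; with $n_i=\log_p|\alpha_i|$ and $q_i=p^{\,a+\max(0,n_i-b)}$, $\mathbf{q}(a,b)=(q_1,\ldots,q_r)$ and $\boldsymbol{\alpha}(a,b)=(\alpha_1^{q_1},\ldots,\alpha_r^{q_r})$ (a basis of $G(a,b)$); ${\rm DL}_{\boldsymbol{\alpha}}(a,b,\delta)$ denotes ${\rm DL}(\boldsymbol{\alpha}(a,b),\delta)$ for $\delta\in G(a,b)$. Vector products such as $\mathbf{s}\mathbf{v}$ are componentwise. *)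

theory Defs
  imports "HOL-Algebra.Algebra" "HOL-Computational_Algebra.Primes"
begin

text \<open>Vectors of group elements / exponents are functions on indices; only indices
  i < r are relevant.  The vector power gamma^x = prod_{i<r} gamma_i^(x_i).\<close>

definition vpow :: "('a, 'b) monoid_scheme \<Rightarrow> (nat \<Rightarrow> 'a) \<Rightarrow> nat \<Rightarrow> (nat \<Rightarrow> int) \<Rightarrow> 'a" where
  "vpow G \<gamma> r x = finprod G (\<lambda>i. \<gamma> i [^]\<^bsub>G\<^esub> x i) {..<r}"

definition exp_box :: "('a, 'b) monoid_scheme \<Rightarrow> (nat \<Rightarrow> 'a) \<Rightarrow> nat \<Rightarrow> (nat \<Rightarrow> int) set" where
  "exp_box G \<gamma> r = {x. (\<forall>i<r. 0 \<le> x i \<and> x i < int (group.ord G (\<gamma> i))) \<and> (\<forall>i\<ge>r. x i = 0)}"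

definition is_basis :: "('a, 'b) monoid_scheme \<Rightarrow> (nat \<Rightarrow> 'a) \<Rightarrow> nat \<Rightarrow> bool" where
  "is_basis G \<gamma> r \<longleftrightarrow> (\<forall>i<r. \<gamma> i \<in> carrier G) \<and>
     (\<forall>\<beta> \<in> generate G (\<gamma> ` {..<r}). \<exists>!x. x \<in> exp_box G \<gamma> r \<and> \<beta> = vpow G \<gamma> r x)"

definition is_basis_of_group :: "('a, 'b) monoid_scheme \<Rightarrow> (nat \<Rightarrow> 'a) \<Rightarrow> nat \<Rightarrow> bool" where
  "is_basis_of_group G \<gamma> r \<longleftrightarrow> is_basis G \<gamma> r \<and> generate G (\<gamma> ` {..<r}) = carrier G"

definition DL :: "('a, 'b) monoid_scheme \<Rightarrow> (nat \<Rightarrow> 'a) \<Rightarrow> nat \<Rightarrow> 'a \<Rightarrow> (nat \<Rightarrow> int)" where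
  "DL G \<gamma> r \<beta> = (THE x. x \<in> exp_box G \<gamma> r \<and> \<beta> = vpow G \<gamma> r x)"

definition Gab :: "('a, 'b) monoid_scheme \<Rightarrow> nat \<Rightarrow> nat \<Rightarrow> nat \<Rightarrow> 'a set" where
  "Gab G p a b = {\<beta> [^]\<^bsub>G\<^esub> (p ^ a) | \<beta>. \<beta> \<in> carrier G \<and> \<beta> [^]\<^bsub>G\<^esub> (p ^ b) = \<one>\<^bsub>G\<^esub>}"

text \<open>n_i = log_p |alpha_i| and q_i = p^(a + max(0, n_i - b)) (nat subtraction is max(0,_)).\<close>
definition nlog :: "('a, 'b) monoid_scheme \<Rightarrow> nat \<Rightarrow> (nat \<Rightarrow> 'a) \<Rightarrow> nat \<Rightarrow> nat" where
  "nlog G p \<alpha> i = (THE n. group.ord G (\<alpha> i) = p ^ n)"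

definition qvec :: "('a, 'b) monoid_scheme \<Rightarrow> nat \<Rightarrow> (nat \<Rightarrow> 'a) \<Rightarrow> nat \<Rightarrow> nat \<Rightarrow> nat \<Rightarrow> nat" where
  "qvec G p \<alpha> a b i = p ^ (a + (nlog G p \<alpha> i - b))"

definition alpha_ab :: "('a, 'b) monoid_scheme \<Rightarrow> nat \<Rightarrow> (nat \<Rightarrow> 'a) \<Rightarrow> nat \<Rightarrow> nat \<Rightarrow> nat \<Rightarrow> 'a" where
  "alpha_ab G p \<alpha> a b i = \<alpha> i [^]\<^bsub>G\<^esub> qvec G p \<alpha> a b i"

definition DL_ab :: "('a, 'b) monoid_scheme \<Rightarrow> nat \<Rightarrow> (nat \<Rightarrow> 'a) \<Rightarrow> nat \<Rightarrow> nat \<Rightarrow> nat \<Rightarrow> 'a \<Rightarrow> (nat \<Rightarrow> int)" where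
  "DL_ab G p \<alpha> r a b \<delta> = DL G (alpha_ab G p \<alpha> a b) r \<delta>"

end

theory Submission
  imports Defs
begin

context comm_group
begin

lemma vpow_carrier: "\<forall>i<r. \<gamma> i \<in> carrier G \<Longrightarrow> vpow G \<gamma> r x \<in> carrier G"
  unfolding vpow_def by (intro finprod_closed) auto

lemma vpow_cong:
  assumes "\<And>i. i<r \<Longrightarrow> \<gamma> i [^] x i = \<gamma>' i [^] (x' i :: int)" "\<forall>i<r. \<gamma>' i \<in> carrier G"
  shows "vpow G \<gamma> r x = vpow G \<gamma>' r x'"
  unfolding vpow_def using assms by (intro finprod_cong') auto

lemma vpow_mult:
  assumes "\<forall>i<r. \<gamma> i \<in> carrier G"
  shows "vpow G \<gamma> r x \<otimes> vpow G \<gamma> r y = vpow G \<gamma> r (\<lambda>i. x i + y i)"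
proof -
  have "vpow G \<gamma> r x \<otimes> vpow G \<gamma> r y = finprod G (\<lambda>i. \<gamma> i [^] x i \<otimes> \<gamma> i [^] y i) {..<r}"
    unfolding vpow_def using assms by (subst finprod_multf) auto
  also have "\<dots> = vpow G \<gamma> r (\<lambda>i. x i + y i)"
    unfolding vpow_def using assms by (intro finprod_cong') (auto simp: int_pow_mult)
  finally show ?thesis .
qed

lemma vpow_zero: "vpow G \<gamma> r (\<lambda>i. 0) = \<one>"
  unfolding vpow_def by (intro finprod_one_eqI) simp

lemma vpow_nat_pow:
  assumes "\<forall>i<r. \<gamma> i \<in> carrier G"
  shows "(vpow G \<gamma> r x) [^] (m::nat) = vpow G \<gamma> r (\<lambda>i. int m * x i)"
proof (induction m)
  case 0
  then show ?case using vpow_zero by simp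
next
  case (Suc m)
  have "(vpow G \<gamma> r x) [^] Suc m = vpow G \<gamma> r (\<lambda>i. int m * x i) \<otimes> vpow G \<gamma> r x"
    using Suc by simp
  also have "\<dots> = vpow G \<gamma> r (\<lambda>i. int m * x i + x i)" using vpow_mult[OF assms] by simp
  also have "(\<lambda>i. int m * x i + x i) = (\<lambda>i. int (Suc m) * x i)" by (auto simp: algebra_simps)
  finally show ?case .
qed

lemma vpow_powvec:
  assumes "\<forall>i<r. \<alpha> i \<in> carrier G" "\<forall>i<r. \<gamma> i = \<alpha> i [^] (c i :: nat)"
  shows "vpow G \<gamma> r x = vpow G \<alpha> r (\<lambda>i. int (c i) * x i)"
  using assms by (intro vpow_cong) (auto simp: int_pow_pow simp flip: int_pow_int)

lemma indep:
  assumes fin: "finite (carrier G)" and B: "is_basis_of_group G \<alpha> r"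
    and eq: "vpow G \<alpha> r x = vpow G \<alpha> r x'" and i: "i < r"
  shows "int (ord (\<alpha> i)) dvd x i - x' i"
proof -
  have car: "\<forall>i<r. \<alpha> i \<in> carrier G" using B by (simp add: is_basis_of_group_def is_basis_def)
  have pos: "\<And>i. i<r \<Longrightarrow> ord (\<alpha> i) \<ge> 1" using car ord_ge_1[OF fin] by auto
  define red where "red = (\<lambda>z::nat\<Rightarrow>int. \<lambda>i. if i<r then z i mod int (ord (\<alpha> i)) else 0)"
  have pos': "\<And>i. i<r \<Longrightarrow> int (ord (\<alpha> i)) > 0" using pos by fastforce
  have box: "red z \<in> exp_box G \<alpha> r" for z
    using pos' by (auto simp: exp_box_def red_def)
  have vr: "vpow G \<alpha> r (red z) = vpow G \<alpha> r z" for z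
  proof (rule vpow_cong[OF _ car])
    fix i assume "i<r"
    then show "\<alpha> i [^] red z i = \<alpha> i [^] z i"
      using car by (subst int_pow_eq) (auto simp: red_def simp flip: mod_eq_dvd_iff)
  qed
  have "vpow G \<alpha> r x \<in> generate G (\<alpha> ` {..<r})"
    using B vpow_carrier[OF car] by (simp add: is_basis_of_group_def)
  then have "\<exists>!z. z \<in> exp_box G \<alpha> r \<and> vpow G \<alpha> r x = vpow G \<alpha> r z"
    using B by (simp add: is_basis_of_group_def is_basis_def)
  then have "red x = red x'" using box vr eq by metis
  then have "x i mod int (ord (\<alpha> i)) = x' i mod int (ord (\<alpha> i))"
    using i unfolding red_def by meson
  then show ?thesis by (simp add: mod_eq_dvd_iff)
qed

lemma indep_pow:
  assumes fin: "finite (carrier G)" and B: "is_basis_of_group G \<alpha> r"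
    and g: "\<forall>i<r. \<gamma> i = \<alpha> i [^] (c i :: nat)"
    and eq: "vpow G \<gamma> r x = vpow G \<gamma> r x'" and i: "i < r"
  shows "int (ord (\<gamma> i)) dvd x i - x' i"
proof -
  have car: "\<forall>i<r. \<alpha> i \<in> carrier G" using B by (simp add: is_basis_of_group_def is_basis_def)
  have "vpow G \<alpha> r (\<lambda>i. int (c i) * x i) = vpow G \<alpha> r (\<lambda>i. int (c i) * x' i)"
    using eq vpow_powvec[OF car g] by simp
  from indep[OF fin B this i] have "int (ord (\<alpha> i)) dvd int (c i) * (x i - x' i)"
    by (simp add: algebra_simps)
  then have "\<alpha> i [^] (int (c i) * (x i - x' i)) = \<one>" using car i by (simp add: int_pow_eq_id)
  then have "(\<alpha> i [^] int (c i)) [^] (x i - x' i) = \<one>" using car i by (simp add: int_pow_pow)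
  then have "\<gamma> i [^] (x i - x' i) = \<one>" using g i by (simp add: int_pow_int)
  then show ?thesis using g i car by (simp add: int_pow_eq_id)
qed

lemma DL_char:
  assumes fin: "finite (carrier G)" and B: "is_basis_of_group G \<alpha> r"
    and g: "\<forall>i<r. \<gamma> i = \<alpha> i [^] (c i :: nat)"
  shows "DL G \<gamma> r (vpow G \<gamma> r z) = (\<lambda>i. if i<r then z i mod int (ord (\<gamma> i)) else 0)"
proof -
  have car: "\<forall>i<r. \<alpha> i \<in> carrier G" using B by (simp add: is_basis_of_group_def is_basis_def)
  have gcar: "\<forall>i<r. \<gamma> i \<in> carrier G" using car g by auto
  have pos: "\<And>i. i<r \<Longrightarrow> ord (\<gamma> i) \<ge> 1" using gcar ord_ge_1[OF fin] by auto
  define zr where "zr = (\<lambda>i. if i<r then z i mod int (ord (\<gamma> i)) else 0)"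
  have pos': "\<And>i. i<r \<Longrightarrow> int (ord (\<gamma> i)) > 0" using pos by fastforce
  have box: "zr \<in> exp_box G \<gamma> r" using pos' by (auto simp: exp_box_def zr_def)
  have vz: "vpow G \<gamma> r z = vpow G \<gamma> r zr"
  proof (rule vpow_cong[OF _ gcar])
    fix i assume "i<r"
    then show "\<gamma> i [^] z i = \<gamma> i [^] zr i"
      using gcar by (subst int_pow_eq) (auto simp: zr_def simp flip: mod_eq_dvd_iff)
  qed
  show ?thesis unfolding DL_def zr_def[symmetric]
  proof (rule the_equality)
    show "zr \<in> exp_box G \<gamma> r \<and> vpow G \<gamma> r z = vpow G \<gamma> r zr" using box vz by simp
  next
    fix x assume x: "x \<in> exp_box G \<gamma> r \<and> vpow G \<gamma> r z = vpow G \<gamma> r x"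
    show "x = zr"
    proof
      fix i show "x i = zr i"
      proof (cases "i<r")
        case True
        have d: "int (ord (\<gamma> i)) dvd z i - x i" using indep_pow[OF fin B g _ True] x by blast
        have "0 \<le> x i" "x i < int (ord (\<gamma> i))" using x True by (auto simp: exp_box_def)
        then have "x i = x i mod int (ord (\<gamma> i))" by simp
        also have "\<dots> = z i mod int (ord (\<gamma> i))" using d by (simp add: mod_eq_dvd_iff dvd_diff_commute)
        finally show ?thesis using True by (simp add: zr_def)
      next
        case False then show ?thesis using x by (simp add: exp_box_def zr_def)
      qed
    qed
  qed
qed

lemma pow_dvd_cancel:
  fixes p :: int assumes "p > 0" "p ^ n dvd p ^ b * y"
  shows "p ^ (n - b) dvd y"
proof (cases "n \<le> b")
  case True then show ?thesis by simp
next
  case False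
  then have "p ^ n = p ^ b * p ^ (n - b)" by (simp flip: power_add)
  then show ?thesis using assms by simp
qed


lemma coords:
  assumes car: "\<forall>i<r. \<alpha> i \<in> carrier G"
    and y: "\<forall>i<r. y i = int (p^(nlog G p \<alpha> i - b)) * u i"
  shows "vpow G \<alpha> r (\<lambda>i. int (p^a) * y i) = vpow G (alpha_ab G p \<alpha> a b) r u"
proof -
  have "vpow G (alpha_ab G p \<alpha> a b) r u = vpow G \<alpha> r (\<lambda>i. int (qvec G p \<alpha> a b i) * u i)"
    using car by (intro vpow_powvec) (auto simp: alpha_ab_def)
  also have "\<dots> = vpow G \<alpha> r (\<lambda>i. int (p^a) * y i)"
    using car y by (intro vpow_cong) (auto simp: qvec_def power_add mult.assoc)
  finally show ?thesis by simp
qed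

lemma divpow:
  assumes fin: "finite (carrier G)" and B: "is_basis_of_group G \<alpha> r"
    and ordp: "\<forall>i<r. ord (\<alpha> i) = p^(nlog G p \<alpha> i)" and p: "p > 0"
    and e: "vpow G \<alpha> r (\<lambda>i. int (p^b) * y i) = \<one>" and i: "i<r"
  shows "int (p^(nlog G p \<alpha> i - b)) dvd y i"
proof -
  have "vpow G \<alpha> r (\<lambda>i. int (p^b) * y i) = vpow G \<alpha> r (\<lambda>i. 0)" using e vpow_zero by simp
  from indep[OF fin B this i] have "int (p ^ nlog G p \<alpha> i) dvd int (p^b) * y i"
    using ordp i by simp
  then have "(int p) ^ nlog G p \<alpha> i dvd (int p)^b * y i" by simp
  from pow_dvd_cancel[OF _ this] p show ?thesis by simp
qed

end

lemma (in comm_group) lemma2_aux: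
  fixes p r j j' k' k :: nat
    and \<alpha> :: "nat \<Rightarrow> 'a" and \<beta> :: 'a
  assumes "True" and "finite (carrier G)"
    and "Factorial_Ring.prime p" and "\<exists>m. order G = p ^ m"
    and "is_basis_of_group G \<alpha> r"
    and "j \<le> j'" and "j' < k'" and "k' \<le> k"
    and "\<beta> \<in> Gab G p j k"
  shows "let x = DL_ab G p \<alpha> r k' k (\<beta> [^]\<^bsub>G\<^esub> (p ^ (k' - j)));
             \<gamma> = \<beta> [^]\<^bsub>G\<^esub> (p ^ (j' - j)) \<otimes>\<^bsub>G\<^esub> vpow G (alpha_ab G p \<alpha> j' k) r (\<lambda>i. - x i)
         in \<gamma> \<in> Gab G p j' k' \<and>
            (let v = DL_ab G p \<alpha> r j' k' \<gamma>;
                 s = (\<lambda>i. qvec G p \<alpha> j' k' i div qvec G p \<alpha> j' k i);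
                 w = DL_ab G p \<alpha> r j' k (\<beta> [^]\<^bsub>G\<^esub> (p ^ (j' - j)))
             in \<forall>i<r. (int (s i) * v i + x i) mod int (group.ord G (alpha_ab G p \<alpha> j' k i)) = w i)"
proof -
  have fin: "finite (carrier G)" by fact
  have B: "is_basis_of_group G \<alpha> r" by fact
  have car: "\<forall>i<r. \<alpha> i \<in> carrier G" using B by (simp add: is_basis_of_group_def is_basis_def)
  have p1: "p > 1" using assms(3) prime_gt_1_nat by blast
  then have p0: "p > 0" by simp
  obtain m where m: "order G = p^m" using assms(4) by blast
  define n where "n = nlog G p \<alpha>"
  have ordp: "\<forall>i<r. ord (\<alpha> i) = p ^ n i"
  proof (intro allI impI)
    fix i assume i: "i<r"
    have "ord (\<alpha> i) dvd p^m" using ord_dvd_group_order[of "\<alpha> i"] car i m by simp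
    then obtain e where e: "ord (\<alpha> i) = p^e"
      using divides_primepow[OF assms(3), of "ord (\<alpha> i)" m] by auto
    have "(THE e. ord (\<alpha> i) = p^e) = e"
      by (rule the_equality) (use e p1 power_inject_exp in auto)
    then show "ord (\<alpha> i) = p ^ n i" unfolding n_def nlog_def using e by simp
  qed
  have ordp': "\<forall>i<r. ord (\<alpha> i) = p ^ nlog G p \<alpha> i" using ordp n_def by simp
  define A where "A = alpha_ab G p \<alpha>"
  have Ag: "\<forall>i<r. A a b i = \<alpha> i [^] qvec G p \<alpha> a b i" for a b by (simp add: A_def alpha_ab_def)
  have Acar: "\<forall>i<r. A a b i \<in> carrier G" for a b using car by (simp add: A_def alpha_ab_def)
  from assms(9) obtain \<delta> where \<delta>: "\<delta> \<in> carrier G" "\<delta> [^] (p^k) = \<one>" "\<beta> = \<delta> [^] (p^j)"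
    unfolding Gab_def by blast
  have "\<delta> \<in> generate G (\<alpha> ` {..<r})" using B \<delta> by (simp add: is_basis_of_group_def)
  then obtain y where y: "\<delta> = vpow G \<alpha> r y"
    using B unfolding is_basis_of_group_def is_basis_def by blast
  have "vpow G \<alpha> r (\<lambda>i. int (p^k) * y i) = \<one>" using \<delta> y vpow_nat_pow[OF car] by simp
  from divpow[OF fin B ordp' p0 this] have dy: "\<forall>i<r. int (p^(n i - k)) dvd y i"
    by (simp add: n_def)
  define u where "u i = y i div int(p^(n i - k))" for i
  have yu: "\<forall>i<r. y i = int (p^(nlog G p \<alpha> i - k)) * u i" using dy by (simp add: u_def n_def)
  have bpow: "\<beta> [^] (p^e) = vpow G \<alpha> r (\<lambda>i. int (p^(j+e)) * y i)" for e
    using \<delta> y vpow_nat_pow[OF car] by (simp add: nat_pow_pow power_add mult_ac)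
  have b1: "\<beta> [^] (p^(k'-j)) = vpow G (A k' k) r u"
    using bpow[of "k'-j"] coords[OF car yu, of k'] assms(6-8) by (simp add: A_def)
  have b2: "\<beta> [^] (p^(j'-j)) = vpow G (A j' k) r u"
    using bpow[of "j'-j"] coords[OF car yu, of j'] assms(6-8) by (simp add: A_def)
  define x where "x = DL_ab G p \<alpha> r k' k (\<beta> [^] (p^(k'-j)))"
  have x: "x = (\<lambda>i. if i<r then u i mod int (ord (A k' k i)) else 0)"
    unfolding x_def DL_ab_def b1 A_def[symmetric] by (rule DL_char[OF fin B Ag])
  define \<gamma> where "\<gamma> = \<beta> [^] (p^(j'-j)) \<otimes> vpow G (A j' k) r (\<lambda>i. - x i)"
  have \<gamma>: "\<gamma> = vpow G (A j' k) r (\<lambda>i. u i - x i)"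
    using b2 vpow_mult[OF Acar] by (simp add: \<gamma>_def)
  define e where "e i = int(p^(n i - k)) * (u i - x i)" for i
  define \<epsilon> where "\<epsilon> = vpow G \<alpha> r e"
  have \<epsilon>c: "\<epsilon> \<in> carrier G" using vpow_carrier[OF car] by (simp add: \<epsilon>_def)
  have eq: "\<forall>i<r. e i = int (p^(nlog G p \<alpha> i - k)) * (u i - x i)" by (simp add: e_def n_def)
  have \<epsilon>j: "\<epsilon> [^] (p^j') = \<gamma>"
    using vpow_nat_pow[OF car] coords[OF car eq, of j'] \<gamma> by (simp add: \<epsilon>_def A_def)
  have dux: "int (ord (A k' k i)) dvd u i - x i" if "i<r" for i
    using that by (simp add: x minus_mod_eq_mult_div)
  have "\<epsilon> [^] (p^k') = vpow G (A k' k) r (\<lambda>i. u i - x i)"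
    using vpow_nat_pow[OF car] coords[OF car eq, of k'] by (simp add: \<epsilon>_def A_def)
  also have "\<dots> = \<one>" unfolding vpow_def
    by (rule finprod_one_eqI) (use Acar dux in \<open>auto simp: int_pow_eq_id\<close>)
  finally have \<epsilon>k: "\<epsilon> [^] (p^k') = \<one>" .
  have part1: "\<gamma> \<in> Gab G p j' k'" unfolding Gab_def using \<epsilon>c \<epsilon>k \<epsilon>j by blast
  have "vpow G \<alpha> r (\<lambda>i. int (p^k') * e i) = \<one>" using \<epsilon>k vpow_nat_pow[OF car] by (simp add: \<epsilon>_def)
  from divpow[OF fin B ordp' p0 this] have de: "\<forall>i<r. int (p^(n i - k')) dvd e i"
    by (simp add: n_def)
  define t where "t i = e i div int(p^(n i - k'))" for i
  have et: "\<forall>i<r. e i = int (p^(nlog G p \<alpha> i - k')) * t i" using de by (simp add: t_def n_def)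
  have \<gamma>t: "\<gamma> = vpow G (A j' k') r t"
    using \<epsilon>j vpow_nat_pow[OF car] coords[OF car et, of j'] by (simp add: \<epsilon>_def A_def)
  define v where "v = DL_ab G p \<alpha> r j' k' \<gamma>"
  have v: "v = (\<lambda>i. if i<r then t i mod int (ord (A j' k' i)) else 0)"
    unfolding v_def DL_ab_def \<gamma>t A_def[symmetric] by (rule DL_char[OF fin B Ag])
  define s where "s = (\<lambda>i. qvec G p \<alpha> j' k' i div qvec G p \<alpha> j' k i)"
  have qs: "qvec G p \<alpha> j' k' i = qvec G p \<alpha> j' k i * s i" for i
  proof -
    have "qvec G p \<alpha> j' k' i = qvec G p \<alpha> j' k i * p ^ ((nlog G p \<alpha> i - k') - (nlog G p \<alpha> i - k))"
      unfolding qvec_def power_add[symmetric] using assms(8) by (intro arg_cong[where f="\<lambda>e. p^e"]) arith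
    then show ?thesis using p0 by (simp add: s_def qvec_def)
  qed
  have "vpow G (A j' k) r (\<lambda>i. int (s i) * v i) = vpow G (A j' k') r v"
  proof (rule vpow_cong[OF _ Acar])
    fix i assume i: "i<r"
    have "A j' k' i = A j' k i [^] s i" using Ag i car by (simp add: qs nat_pow_pow)
    then show "A j' k i [^] (int (s i) * v i) = A j' k' i [^] v i"
      using Acar i by (simp add: int_pow_pow flip: int_pow_int)
  qed
  also have "\<dots> = vpow G (A j' k') r t"
  proof (rule vpow_cong[OF _ Acar])
    fix i assume i: "i<r"
    show "A j' k' i [^] v i = A j' k' i [^] t i"
      using Acar i by (subst int_pow_eq) (auto simp: v simp flip: mod_eq_dvd_iff)
  qed
  finally have "vpow G (A j' k) r (\<lambda>i. int (s i) * v i) = vpow G (A j' k) r (\<lambda>i. u i - x i)"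
    using \<gamma>t \<gamma> by simp
  from indep_pow[OF fin B Ag this]
  have dd: "\<forall>i<r. int (ord (A j' k i)) dvd int (s i) * v i - (u i - x i)" by blast
  define w where "w = DL_ab G p \<alpha> r j' k (\<beta> [^] (p^(j'-j)))"
  have w: "w = (\<lambda>i. if i<r then u i mod int (ord (A j' k i)) else 0)"
    unfolding w_def DL_ab_def b2 A_def[symmetric] by (rule DL_char[OF fin B Ag])
  have part2: "\<forall>i<r. (int (s i) * v i + x i) mod int (ord (A j' k i)) = w i"
  proof (intro allI impI)
    fix i assume i: "i<r"
    have "int (ord (A j' k i)) dvd (int (s i) * v i + x i) - u i"
      using dd i by (simp add: algebra_simps)
    then show "(int (s i) * v i + x i) mod int (ord (A j' k i)) = w i"
      using i by (simp add: w mod_eq_dvd_iff)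
  qed
  show ?thesis
    using part1 part2 unfolding Let_def x_def[symmetric]
    by (simp add: \<gamma>_def v_def w_def s_def A_def)
qed

theorem lemma2:
  fixes G :: "('a, 'b) monoid_scheme" and p r j j' k' k :: nat
    and \<alpha> :: "nat \<Rightarrow> 'a" and \<beta> :: 'a
  assumes "comm_group G" and "finite (carrier G)"
    and "Factorial_Ring.prime p" and "\<exists>m. order G = p ^ m"
    and "is_basis_of_group G \<alpha> r"
    and "j \<le> j'" and "j' < k'" and "k' \<le> k"
    and "\<beta> \<in> Gab G p j k"
  shows "let x = DL_ab G p \<alpha> r k' k (\<beta> [^]\<^bsub>G\<^esub> (p ^ (k' - j)));
             \<gamma> = \<beta> [^]\<^bsub>G\<^esub> (p ^ (j' - j)) \<otimes>\<^bsub>G\<^esub> vpow G (alpha_ab G p \<alpha> j' k) r (\<lambda>i. - x i)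
         in \<gamma> \<in> Gab G p j' k' \<and>
            (let v = DL_ab G p \<alpha> r j' k' \<gamma>;
                 s = (\<lambda>i. qvec G p \<alpha> j' k' i div qvec G p \<alpha> j' k i);
                 w = DL_ab G p \<alpha> r j' k (\<beta> [^]\<^bsub>G\<^esub> (p ^ (j' - j)))
             in \<forall>i<r. (int (s i) * v i + x i) mod int (group.ord G (alpha_ab G p \<alpha> j' k i)) = w i)"
  using comm_group.lemma2_aux[OF assms(1) _ assms(2-)] by simp

end
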